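(* Let $0<\omega_1<\omega_2<\cdots$, $(c_j)$ a real square-summable sequence with all $c_j\ne0$, $\gamma>0$, and let $A$ be the operator on $H=\ell^2\times\ell^2$ (complex) given by $A(q,p)=(-i\Omega q+\check Aq+\check Ap,\ \check Aq+i\Omega p+\check Ap)$ with $\Omega=\mathrm{diag}(\omega_j)$, $(\check Ax)_j=-\frac\gamma2c_j\sum_\iota c_\iota x_\iota$. Assume the standing enumeration (S) of the eigenvalues $\{\lambda_n,\bar\lambda_n\}$ of $A$ given in the context, and let $G$ be the diagonal operator $G(q,p)=(G_1q,G_2p)$, $G_1=\mathrm{diag}(\bar\lambda_1,\bar\lambda_2,\dots)$, $G_2=\mathrm{diag}(\lambda_1,\lambda_2,\dots)$ on its natural domain. Assume (A2): there is $\kappa>0$ with $\omega_{j+1}-\omega_j\ge\kappa$ for all $j$; and (A3): there are $\alpha>0$, $\beta>0$, $k_0\in\mathbb N$ with $|c_k|\omega_k^{\alpha/2}\ge\beta$ for all $k\ge k_0$. Then $$\|R(is;G)\|=\|(G-isI)^{-1}\|=O(|s|^\alpha)\quad\text{as } |s|\to\infty,\ s\in\mathbb R.$$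
   Context: Standing enumeration (S): $f(\lambda)=\sum_j\frac{c_j^2}{\omega_j}\big(\frac1{\lambda-i\omega_j}-\frac1{\lambda+i\omega_j}\big)+\frac{2i}{\gamma\lambda}$; the eigenvalues of $A$ are pairwise distinct simple zeros of $f$ forming the set $\{\lambda_n,\bar\lambda_n:n\in\mathbb N\}$, with $\lambda_n$ in a neighbourhood of $i\omega_n$ and $\bar\lambda_n$ near $-i\omega_n$, none purely imaginary; and for every $k$ (with $\omega_k>1$, $\omega_{k+1}-\omega_k>\omega_k-\omega_{k-1}$ for $k\ge2$), with $F_k(\lambda)=(\lambda-i\omega_k)f(\lambda)$, $\lambda_k^*=i\omega_k-F_k(i\omega_k)/F_k'(i\omega_k)$, $\rho_k$ defined by $F_k(\lambda)=F_k(i\omega_k)+(\lambda-i\omega_k)F_k'(i\omega_k)+(\lambda-i\omega_k)^2\rho_k(\lambda)$, there are $0<R_1^{(k)}<\omega_k-\omega_{k-1}$ and $R_k>0$ such that $M_k=\sup_{|\lambda-i\omega_k|\le R_1^{(k)}}|\rho_k|$ satisfies $0<M_k<\frac{\gamma\omega_k|F_k'(i\omega_k)|^3}{c_k^2(\gamma\omega_k|F_k'(i\omega_k)|+1)^2}$, $\sqrt{R_k}\in(b_k-\sqrt{b_k^2-d_k},b_k+\sqrt{b_k^2-d_k})$ ($b_k=\sqrt{|F_k'(i\omega_k)|/(4M_k)}$, $d_k=|F_k(i\omega_k)/F_k'(i\omega_k)|$), $R_k\le\frac12|\mathrm{Re}\lambda_k^*|$, $\{|\lambda-\lambda_k^*|<R_k\}\subset\{|\lambda-i\omega_k|\le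 R_1^{(k)}\}$, and $\lambda_k$ is the zero of $f$ in $\{|\lambda-\lambda_k^*|<R_k\}$. *)

theory Defs
  imports "HOL-Analysis.Analysis"
begin

text \<open>Indexing convention: the paper's index j = 1,2,... corresponds to the
Isabelle index j-1 = 0,1,...  Sequences are functions nat => _.\<close>

definition l2 :: "(nat \<Rightarrow> complex) \<Rightarrow> bool" where
  "l2 x \<longleftrightarrow> summable (\<lambda>j. (cmod (x j))\<^sup>2)"

definition normH :: "(nat \<Rightarrow> complex) \<Rightarrow> (nat \<Rightarrow> complex) \<Rightarrow> real" where
  "normH q p = sqrt ((\<Sum>j. (cmod (q j))\<^sup>2) + (\<Sum>j. (cmod (p j))\<^sup>2))"

definition checkA :: "(nat \<Rightarrow> real) \<Rightarrow> real \<Rightarrow> (nat \<Rightarrow> complex) \<Rightarrow> nat \<Rightarrow> complex" where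
  "checkA c \<gamma> x j = - of_real (\<gamma> / 2 * c j) * (\<Sum>i. of_real (c i) * x i)"

definition domA :: "(nat \<Rightarrow> real) \<Rightarrow> (nat \<Rightarrow> complex) \<Rightarrow> (nat \<Rightarrow> complex) \<Rightarrow> bool" where
  "domA \<omega> q p \<longleftrightarrow> l2 q \<and> l2 p \<and> l2 (\<lambda>j. of_real (\<omega> j) * q j) \<and> l2 (\<lambda>j. of_real (\<omega> j) * p j)"

definition opA :: "(nat \<Rightarrow> real) \<Rightarrow> (nat \<Rightarrow> real) \<Rightarrow> real \<Rightarrow>
    (nat \<Rightarrow> complex) \<Rightarrow> (nat \<Rightarrow> complex) \<Rightarrow> (nat \<Rightarrow> complex) \<times> (nat \<Rightarrow> complex)" where
  "opA c \<omega> \<gamma> q p =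
     ((\<lambda>j. - \<i> * of_real (\<omega> j) * q j + checkA c \<gamma> q j + checkA c \<gamma> p j),
      (\<lambda>j. checkA c \<gamma> q j + \<i> * of_real (\<omega> j) * p j + checkA c \<gamma> p j))"

definition eigenvalue_A :: "(nat \<Rightarrow> real) \<Rightarrow> (nat \<Rightarrow> real) \<Rightarrow> real \<Rightarrow> complex \<Rightarrow> bool" where
  "eigenvalue_A c \<omega> \<gamma> \<mu> \<longleftrightarrow>
     (\<exists>q p. domA \<omega> q p \<and> (q \<noteq> (\<lambda>_. 0) \<or> p \<noteq> (\<lambda>_. 0)) \<and>
            opA c \<omega> \<gamma> q p = ((\<lambda>j. \<mu> * q j), (\<lambda>j. \<mu> * p j)))"

definition fterm :: "(nat \<Rightarrow> real) \<Rightarrow> (nat \<Rightarrow> real) \<Rightarrow> nat \<Rightarrow> complex \<Rightarrow> complex" where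
  "fterm c \<omega> j z = of_real ((c j)\<^sup>2 / \<omega> j) *
      (1 / (z - \<i> * of_real (\<omega> j)) - 1 / (z + \<i> * of_real (\<omega> j)))"

definition fS :: "(nat \<Rightarrow> real) \<Rightarrow> (nat \<Rightarrow> real) \<Rightarrow> real \<Rightarrow> complex \<Rightarrow> complex" where
  "fS c \<omega> \<gamma> z = (\<Sum>j. fterm c \<omega> j z) + 2 * \<i> / (of_real \<gamma> * z)"

text \<open>F_k(z) = (z - i omega_k) f(z), written in its analytically continued form
(so that it is also correct at z = i omega_k, where f has a pole).\<close>
definition FS :: "(nat \<Rightarrow> real) \<Rightarrow> (nat \<Rightarrow> real) \<Rightarrow> real \<Rightarrow> nat \<Rightarrow> complex \<Rightarrow> complex" where
  "FS c \<omega> \<gamma> k z =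
     of_real ((c k)\<^sup>2 / \<omega> k) * (1 - (z - \<i> * of_real (\<omega> k)) / (z + \<i> * of_real (\<omega> k)))
     + (z - \<i> * of_real (\<omega> k)) *
         ((\<Sum>j. if j = k then 0 else fterm c \<omega> j z) + 2 * \<i> / (of_real \<gamma> * z))"

definition FSd :: "(nat \<Rightarrow> real) \<Rightarrow> (nat \<Rightarrow> real) \<Rightarrow> real \<Rightarrow> nat \<Rightarrow> complex" where
  "FSd c \<omega> \<gamma> k = deriv (FS c \<omega> \<gamma> k) (\<i> * of_real (\<omega> k))"

definition lamstar :: "(nat \<Rightarrow> real) \<Rightarrow> (nat \<Rightarrow> real) \<Rightarrow> real \<Rightarrow> nat \<Rightarrow> complex" where
  "lamstar c \<omega> \<gamma> k = \<i> * of_real (\<omega> k) - FS c \<omega> \<gamma> k (\<i> * of_real (\<omega> k)) / FSd c \<omega> \<gamma> k"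

definition rhoS :: "(nat \<Rightarrow> real) \<Rightarrow> (nat \<Rightarrow> real) \<Rightarrow> real \<Rightarrow> nat \<Rightarrow> complex \<Rightarrow> complex" where
  "rhoS c \<omega> \<gamma> k z =
     (if z = \<i> * of_real (\<omega> k) then deriv (deriv (FS c \<omega> \<gamma> k)) (\<i> * of_real (\<omega> k)) / 2
      else (FS c \<omega> \<gamma> k z - FS c \<omega> \<gamma> k (\<i> * of_real (\<omega> k))
              - (z - \<i> * of_real (\<omega> k)) * FSd c \<omega> \<gamma> k) / (z - \<i> * of_real (\<omega> k))\<^sup>2)"

text \<open>The quantitative localisation condition of (S) for the index k
(paper's convention omega_0 := 0 for the first index).\<close>
definition S_local :: "(nat \<Rightarrow> real) \<Rightarrow> (nat \<Rightarrow> real) \<Rightarrow> real \<Rightarrow> (nat \<Rightarrow> complex) \<Rightarrow> nat \<Rightarrow> bool" where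
  "S_local c \<omega> \<gamma> lam k \<longleftrightarrow>
    (\<exists>R1 R. 0 < R1 \<and> R1 < \<omega> k - (if k = 0 then 0 else \<omega> (k - 1)) \<and> 0 < R \<and>
      (let Fd = FSd c \<omega> \<gamma> k;
           M = (SUP z\<in>cball (\<i> * of_real (\<omega> k)) R1. cmod (rhoS c \<omega> \<gamma> k z));
           b = sqrt (cmod Fd / (4 * M));
           d = cmod (FS c \<omega> \<gamma> k (\<i> * of_real (\<omega> k)) / Fd);
           ls = lamstar c \<omega> \<gamma> k
       in 0 < M \<and>
          M < \<gamma> * \<omega> k * (cmod Fd) ^ 3 / ((c k)\<^sup>2 * (\<gamma> * \<omega> k * cmod Fd + 1)\<^sup>2) \<and>
          b - sqrt (b\<^sup>2 - d) < sqrt R \<and> sqrt R < b + sqrt (b\<^sup>2 - d) \<and>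
          R \<le> \<bar>Re ls\<bar> / 2 \<and>
          ball ls R \<subseteq> cball (\<i> * of_real (\<omega> k)) R1 \<and>
          lam k \<in> ball ls R \<and> fS c \<omega> \<gamma> (lam k) = 0 \<and>
          (\<forall>z\<in>ball ls R. fS c \<omega> \<gamma> z = 0 \<longrightarrow> z = lam k)))"

text \<open>Resolvent of the diagonal operator G = diag(conj lambda_n) x diag(lambda_n)
at mu: (G - mu I)^{-1} acts diagonally with the reciprocal entries.\<close>
definition resolvG :: "(nat \<Rightarrow> complex) \<Rightarrow> complex \<Rightarrow> (nat \<Rightarrow> complex) \<Rightarrow> (nat \<Rightarrow> complex)
    \<Rightarrow> (nat \<Rightarrow> complex) \<times> (nat \<Rightarrow> complex)" where
  "resolvG lam \<mu> q p = ((\<lambda>n. q n / (cnj (lam n) - \<mu>)), (\<lambda>n. p n / (lam n - \<mu>)))"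

end

theory Submission
  imports Defs
begin

lemma om_gap:
  fixes \<omega> :: "nat \<Rightarrow> real"
  assumes sm: "strict_mono \<omega>" and g: "\<forall>j. \<omega> (j + 1) - \<omega> j \<ge> \<kappa>" and ne: "j \<noteq> k"
  shows "\<bar>\<omega> j - \<omega> k\<bar> \<ge> \<kappa>"
proof -
  have m: "mono \<omega>" using sm strict_mono_mono by blast
  have *: "\<omega> b - \<omega> a \<ge> \<kappa> \<and> \<omega> a \<le> \<omega> b" if "a < b" for a b
  proof -
    have "\<omega> (a+1) \<le> \<omega> b" using m that by (simp add: monoD)
    moreover have "\<omega> a < \<omega> b" using sm that by (simp add: strict_mono_less)
    ultimately show ?thesis using g[rule_format, of a] by linarith
  qed
  show ?thesis
  proof (cases "j < k")
    case True then show ?thesis using *[OF True] by linarith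
  next
    case False then have "k < j" using ne by linarith
    then show ?thesis using *[of k j] by linarith
  qed
qed

lemma norm_ii_diff: "cmod (\<i> * of_real a - \<i> * of_real b) = \<bar>a - b\<bar>"
proof -
  have "\<i> * of_real a - \<i> * of_real b = \<i> * of_real (a - b)" by (simp add: algebra_simps)
  then have "cmod (\<i> * of_real a - \<i> * of_real b) = cmod \<i> * cmod (of_real (a - b) :: complex)"
    by (simp only: norm_mult)
  moreover have "cmod (of_real (a - b) :: complex) = \<bar>a - b\<bar>" by (rule norm_of_real)
  ultimately show ?thesis by simp
qed

lemma fterm_bound:
  fixes \<omega> c :: "nat \<Rightarrow> real"
  assumes om1: "\<forall>k. \<omega> k > 1" and kap: "0 < \<kappa>" and dz: "cmod (z - \<i> * of_real (\<omega> j)) \<ge> \<kappa>/2"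
    and imz: "Im z \<ge> 0"
  shows "cmod (fterm c \<omega> j z) \<le> (c j)\<^sup>2 * (2/\<kappa> + 1)"
proof -
  have w1: "\<omega> j > 1" using om1 by auto
  have n2: "cmod (z + \<i> * of_real (\<omega> j)) \<ge> \<omega> j"
  proof -
    have "\<bar>Im (z + \<i> * of_real (\<omega> j))\<bar> \<le> cmod (z + \<i> * of_real (\<omega> j))" by (rule abs_Im_le_cmod)
    moreover have "Im (z + \<i> * of_real (\<omega> j)) = Im z + \<omega> j" by simp
    ultimately show ?thesis using imz w1 by linarith
  qed
  have a1: "cmod (1 / (z - \<i> * of_real (\<omega> j))) \<le> 2/\<kappa>"
    using dz kap by (simp add: norm_divide divide_simps)
  have a2: "cmod (1 / (z + \<i> * of_real (\<omega> j))) \<le> 1"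
    using n2 w1 by (simp add: norm_divide divide_simps)
  have "cmod (1 / (z - \<i> * of_real (\<omega> j)) - 1 / (z + \<i> * of_real (\<omega> j))) \<le> 2/\<kappa> + 1"
    using a1 a2 norm_triangle_ineq4[of "1 / (z - \<i> * of_real (\<omega> j))" "1 / (z + \<i> * of_real (\<omega> j))"] by linarith
  moreover have "\<bar>(c j)\<^sup>2 / \<omega> j\<bar> \<le> (c j)\<^sup>2" using w1 mult_left_mono[of 1 "\<omega> j" "(c j)\<^sup>2"] by (simp add: divide_simps)
  ultimately have "\<bar>(c j)\<^sup>2 / \<omega> j\<bar> * cmod (1 / (z - \<i> * of_real (\<omega> j)) - 1 / (z + \<i> * of_real (\<omega> j)))
     \<le> (c j)\<^sup>2 * (2/\<kappa> + 1)"
    by (intro mult_mono) auto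
  moreover have "cmod (fterm c \<omega> j z) = \<bar>(c j)\<^sup>2 / \<omega> j\<bar> * cmod (1 / (z - \<i> * of_real (\<omega> j)) - 1 / (z + \<i> * of_real (\<omega> j)))"
    by (simp only: fterm_def norm_mult norm_of_real)
  ultimately show ?thesis by linarith
qed

lemma g_cont:
  fixes \<omega> c :: "nat \<Rightarrow> real"
  assumes c_l2: "summable (\<lambda>j. (c j)\<^sup>2)" and om1: "\<forall>k. \<omega> k > 1" and sm: "strict_mono \<omega>"
   and kap: "0 < \<kappa>" "\<forall>j. \<omega> (j + 1) - \<omega> j \<ge> \<kappa>"
  shows "isCont (\<lambda>z. \<Sum>j. if j = k then 0 else fterm c \<omega> j z) (\<i> * of_real (\<omega> k))"
proof -
  define r where "r = min (\<kappa>/2) 1"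
  define S where "S = ball (\<i> * of_real (\<omega> k)) r"
  define h where "h = (\<lambda>j z. if j = k then 0 else fterm c \<omega> j z)"
  have r0: "r > 0" using kap by (simp add: r_def)
  have zS: "cmod (z - \<i> * of_real (\<omega> j)) \<ge> \<kappa>/2 \<and> Im z > 0" if "z \<in> S" "j \<noteq> k" for z j
  proof -
    have d: "cmod (z - \<i> * of_real (\<omega> k)) < r" using that(1) by (simp add: S_def dist_norm norm_minus_commute)
    have "\<bar>\<omega> k - \<omega> j\<bar> \<ge> \<kappa>" using om_gap[OF sm kap(2), of k j] that(2) by simp
    then have "cmod (\<i> * of_real (\<omega> k) - \<i> * of_real (\<omega> j)) \<ge> \<kappa>" by (simp only: norm_ii_diff)
    moreover have "cmod (\<i> * of_real (\<omega> k) - \<i> * of_real (\<omega> j)) \<le> cmod (z - \<i> * of_real (\<omega> j)) + cmod (z - \<i> * of_real (\<omega> k))"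
    proof -
      have "\<i> * of_real (\<omega> k) - \<i> * of_real (\<omega> j) = (z - \<i> * of_real (\<omega> j)) - (z - \<i> * of_real (\<omega> k))" by simp
      then show ?thesis using norm_triangle_ineq4[of "z - \<i> * of_real (\<omega> j)" "z - \<i> * of_real (\<omega> k)"] by simp
    qed
    moreover have "\<bar>Im (z - \<i> * of_real (\<omega> k))\<bar> \<le> cmod (z - \<i> * of_real (\<omega> k))" by (rule abs_Im_le_cmod)
    moreover have "\<omega> k > 1" using om1 by auto
    moreover have "r \<le> \<kappa>/2" "r \<le> 1" by (simp_all add: r_def)
    moreover have "Im (z - \<i> * of_real (\<omega> k)) = Im z - \<omega> k" by simp
    ultimately show ?thesis using d by linarith
  qed
  have bnd: "norm (h j z) \<le> (c j)\<^sup>2 * (2/\<kappa> + 1)" if "z \<in> S" for j z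
  proof (cases "j = k")
    case True then show ?thesis using kap by (simp add: h_def)
  next
    case False then show ?thesis using fterm_bound[OF om1 kap(1), of z j c] zS[OF that False] by (simp add: h_def)
  qed
  have cont: "continuous_on S (h j)" for j
  proof (cases "j = k")
    case True then show ?thesis by (simp add: h_def)
  next
    case False
    have nz: "z - \<i> * of_real (\<omega> j) \<noteq> 0 \<and> z + \<i> * of_real (\<omega> j) \<noteq> 0" if "z \<in> S" for z
    proof -
      have "Im (z + \<i> * of_real (\<omega> j)) > 0" using zS[OF that False] om1 by (simp add: add_pos_pos less_trans[OF zero_less_one])
      then have "z + \<i> * of_real (\<omega> j) \<noteq> 0"
      proof (intro notI)
        assume pos: "Im (z + \<i> * of_real (\<omega> j)) > 0" and eq: "z + \<i> * of_real (\<omega> j) = 0"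
        have "Im (z + \<i> * of_real (\<omega> j)) = Im 0" using eq by (rule arg_cong)
        then show False using pos by simp
      qed
      moreover have "cmod (z - \<i> * of_real (\<omega> j)) > 0" using zS[OF that False] kap by linarith
      ultimately show ?thesis by auto
    qed
    have "continuous_on S (\<lambda>z. of_real ((c j)\<^sup>2 / \<omega> j) * (1 / (z - \<i> * of_real (\<omega> j)) - 1 / (z + \<i> * of_real (\<omega> j))))"
      using nz by (intro continuous_intros) auto
    then show ?thesis unfolding h_def fterm_def using False by simp
  qed
  have ul: "uniform_limit S (\<lambda>n z. \<Sum>i<n. h i z) (\<lambda>z. suminf (\<lambda>i. h i z)) sequentially"
    by (rule Weierstrass_m_test[OF bnd], assumption, rule summable_mult2[OF c_l2])
  have ev: "\<forall>\<^sub>F n in sequentially. continuous_on S (\<lambda>z. \<Sum>i<n. h i z)"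
    by (intro always_eventually allI continuous_on_sum cont)
  have "continuous_on S (\<lambda>z. suminf (\<lambda>i. h i z))"
    by (rule uniform_limit_theorem[OF ev ul trivial_limit_sequentially])
  moreover have "\<i> * of_real (\<omega> k) \<in> S" using r0 by (simp add: S_def)
  moreover have "open S" by (simp add: S_def)
  ultimately have "isCont (\<lambda>z. suminf (\<lambda>i. h i z)) (\<i> * of_real (\<omega> k))"
    using continuous_on_eq_continuous_at by blast
  then show ?thesis by (simp add: h_def)
qed

lemma FS_at: "FS c \<omega> \<gamma> k (\<i> * of_real (\<omega> k)) = of_real ((c k)\<^sup>2 / \<omega> k)"
  by (simp add: FS_def)

lemma FSd_eq:
  fixes \<omega> c :: "nat \<Rightarrow> real"
  assumes c_l2: "summable (\<lambda>j. (c j)\<^sup>2)" and om1: "\<forall>k. \<omega> k > 1" and sm: "strict_mono \<omega>"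
   and kap: "0 < \<kappa>" "\<forall>j. \<omega> (j + 1) - \<omega> j \<ge> \<kappa>" and gp: "0 < \<gamma>"
  shows "FSd c \<omega> \<gamma> k = of_real (2 / (\<gamma> * \<omega> k)) + \<i> * of_real ((c k)\<^sup>2 / (2 * (\<omega> k)\<^sup>2))
           + (\<Sum>j. if j = k then 0 else fterm c \<omega> j (\<i> * of_real (\<omega> k)))"
proof -
  define a where "a = \<i> * of_real (\<omega> k)"
  define g where "g = (\<lambda>z. (\<Sum>j. if j = k then 0 else fterm c \<omega> j z) + 2 * \<i> / (of_real \<gamma> * z))"
  define A where "A = (\<lambda>z. of_real ((c k)\<^sup>2 / \<omega> k) * (1 - (z - a) / (z + a)))"
  have wk: "\<omega> k > 1" using om1 by auto
  have a0: "a \<noteq> 0" and a2: "a + a \<noteq> 0" using wk by (auto simp: a_def complex_eq_iff)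
  have dA: "(A has_field_derivative of_real ((c k)\<^sup>2 / \<omega> k) * (- ((a + a) - (a - a)) / (a + a)\<^sup>2)) (at a)"
    unfolding A_def using a2 wk
    by (auto intro!: derivative_eq_intros simp: power2_eq_square)
  have gc: "isCont g a"
    unfolding g_def a_def using g_cont[OF c_l2 om1 sm kap, of k] a0 gp wk
    by (auto intro!: continuous_intros simp: a_def)
  have dB: "((\<lambda>z. (z - a) * g z) has_field_derivative g a) (at a)"
    unfolding CARAT_DERIV by (rule exI[of _ g]) (auto simp: gc mult.commute)
  have FSe: "FS c \<omega> \<gamma> k = (\<lambda>z. A z + (z - a) * g z)"
    by (rule ext) (simp add: FS_def A_def g_def a_def)
  have "FSd c \<omega> \<gamma> k = of_real ((c k)\<^sup>2 / \<omega> k) * (- ((a + a) - (a - a)) / (a + a)\<^sup>2) + g a"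
    unfolding FSd_def FSe a_def[symmetric]
    by (rule DERIV_imp_deriv) (rule DERIV_add[OF dA dB])
  also have "of_real ((c k)\<^sup>2 / \<omega> k) * (- ((a + a) - (a - a)) / (a + a)\<^sup>2) = \<i> * of_real ((c k)\<^sup>2 / (2 * (\<omega> k)\<^sup>2))"
    using wk by (simp add: a_def field_simps power2_eq_square)
  also have "g a = of_real (2 / (\<gamma> * \<omega> k)) + (\<Sum>j. if j = k then 0 else fterm c \<omega> j (\<i> * of_real (\<omega> k)))"
    using wk gp by (simp add: g_def a_def field_simps)
  finally show ?thesis by simp
qed

lemma fterm_at:
  fixes \<omega> c :: "nat \<Rightarrow> real"
  assumes "\<omega> j > 0" "\<omega> k > 0" "\<omega> j \<noteq> \<omega> k"
  shows "fterm c \<omega> j (\<i> * of_real (\<omega> k)) = - \<i> * of_real (2 * (c j)\<^sup>2 / ((\<omega> k)\<^sup>2 - (\<omega> j)\<^sup>2))"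
proof -
  have d1: "\<omega> k - \<omega> j \<noteq> 0" "\<omega> k + \<omega> j \<noteq> 0" "(\<omega> k)\<^sup>2 - (\<omega> j)\<^sup>2 \<noteq> 0" using assms
    by (auto simp: power2_eq_square square_diff_square_factored)
  have hi: "1 / (\<i> * of_real x) = - \<i> * of_real (1 / x)" for x :: real
    by (simp add: divide_complex_def)
  have e1: "\<i> * of_real (\<omega> k) - \<i> * of_real (\<omega> j) = \<i> * of_real (\<omega> k - \<omega> j)" by (simp add: algebra_simps)
  have e2: "\<i> * of_real (\<omega> k) + \<i> * of_real (\<omega> j) = \<i> * of_real (\<omega> k + \<omega> j)" by (simp add: algebra_simps)
  have "fterm c \<omega> j (\<i> * of_real (\<omega> k)) = of_real ((c j)\<^sup>2 / \<omega> j) * (1 / (\<i> * of_real (\<omega> k - \<omega> j)) - 1 / (\<i> * of_real (\<omega> k + \<omega> j)))"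
    by (simp only: fterm_def e1 e2)
  also have "\<dots> = of_real ((c j)\<^sup>2 / \<omega> j) * (- \<i> * of_real (1 / (\<omega> k - \<omega> j)) - (- \<i> * of_real (1 / (\<omega> k + \<omega> j))))"
    by (simp only: hi)
  also have "\<dots> = - \<i> * of_real ((c j)\<^sup>2 / \<omega> j * (1 / (\<omega> k - \<omega> j) - 1 / (\<omega> k + \<omega> j)))"
    by (simp only: of_real_mult of_real_diff) (simp add: algebra_simps)
  also have "(c j)\<^sup>2 / \<omega> j * (1 / (\<omega> k - \<omega> j) - 1 / (\<omega> k + \<omega> j)) = 2 * (c j)\<^sup>2 / ((\<omega> k)\<^sup>2 - (\<omega> j)\<^sup>2)"
    using d1 assms by (simp add: field_simps power2_eq_square)
  finally show ?thesis .
qed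

lemma rsum:
  fixes \<omega> c :: "nat \<Rightarrow> real"
  assumes c_l2: "summable (\<lambda>j. (c j)\<^sup>2)" and om1: "\<forall>k. \<omega> k > 1" and sm: "strict_mono \<omega>"
   and kap: "0 < \<kappa>" "\<forall>j. \<omega> (j + 1) - \<omega> j \<ge> \<kappa>"
  shows "\<exists>X. (\<Sum>j. if j = k then 0 else fterm c \<omega> j (\<i> * of_real (\<omega> k))) = \<i> * of_real X
              \<and> \<bar>X\<bar> \<le> 2 * (\<Sum>j. (c j)\<^sup>2) / (\<kappa> * \<omega> k)"
proof -
  define r where "r = (\<lambda>j. if j = k then 0 else 2 * (c j)\<^sup>2 / ((\<omega> k)\<^sup>2 - (\<omega> j)\<^sup>2))"
  have wk: "\<omega> k > 1" using om1 by auto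
  have rb: "\<bar>r j\<bar> \<le> 2 / (\<kappa> * \<omega> k) * (c j)\<^sup>2" for j
  proof (cases "j = k")
    case True then show ?thesis using kap wk by (simp add: r_def)
  next
    case False
    have g: "\<bar>\<omega> j - \<omega> k\<bar> \<ge> \<kappa>" using om_gap[OF sm kap(2) False] .
    have wj: "\<omega> j > 1" using om1 by auto
    have "\<bar>(\<omega> k)\<^sup>2 - (\<omega> j)\<^sup>2\<bar> = \<bar>\<omega> j - \<omega> k\<bar> * (\<omega> k + \<omega> j)"
    proof -
      have "(\<omega> k)\<^sup>2 - (\<omega> j)\<^sup>2 = (\<omega> k - \<omega> j) * (\<omega> k + \<omega> j)" by (simp add: power2_eq_square algebra_simps)
      then have "\<bar>(\<omega> k)\<^sup>2 - (\<omega> j)\<^sup>2\<bar> = \<bar>\<omega> k - \<omega> j\<bar> * \<bar>\<omega> k + \<omega> j\<bar>" by (simp add: abs_mult)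
      then show ?thesis using wk wj by (simp add: abs_minus_commute)
    qed
    also have "\<dots> \<ge> \<kappa> * \<omega> k" using g wk wj kap by (intro mult_mono) auto
    finally have den: "\<bar>(\<omega> k)\<^sup>2 - (\<omega> j)\<^sup>2\<bar> \<ge> \<kappa> * \<omega> k" .
    have kp: "\<kappa> * \<omega> k > 0" using kap wk by simp
    have "\<bar>r j\<bar> = 2 * (c j)\<^sup>2 / \<bar>(\<omega> k)\<^sup>2 - (\<omega> j)\<^sup>2\<bar>" using False by (simp add: r_def)
    also have "\<dots> \<le> 2 * (c j)\<^sup>2 / (\<kappa> * \<omega> k)" using den kp by (intro divide_left_mono) auto
    finally show ?thesis by simp
  qed
  have sM: "summable (\<lambda>j. 2 / (\<kappa> * \<omega> k) * (c j)\<^sup>2)" by (intro summable_mult c_l2)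
  have sa: "summable (\<lambda>j. \<bar>r j\<bar>)" by (rule summable_rabs_comparison_test[OF _ sM]) (use rb in auto)
  have sr: "summable r" using sa summable_rabs_cancel by blast
  have "(\<Sum>j. if j = k then 0 else fterm c \<omega> j (\<i> * of_real (\<omega> k))) = (\<Sum>j. (- \<i>) * of_real (r j))"
  proof (rule arg_cong[where f=suminf], rule ext)
    fix j show "(if j = k then 0 else fterm c \<omega> j (\<i> * of_real (\<omega> k))) = (- \<i>) * of_real (r j)"
    proof (cases "j = k")
      case False
      have "\<omega> j \<noteq> \<omega> k" using sm False by (metis strict_mono_eq)
      then show ?thesis using False fterm_at[of \<omega> j k c] om1 by (simp add: r_def less_trans[OF zero_less_one])
    qed (simp add: r_def)
  qed
  also have "\<dots> = (- \<i>) * of_real (\<Sum>j. r j)"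
    using suminf_mult[OF summable_of_real[OF sr], of "- \<i>"] suminf_of_real[OF sr, where 'a=complex] by simp
  finally have e: "(\<Sum>j. if j = k then 0 else fterm c \<omega> j (\<i> * of_real (\<omega> k))) = \<i> * of_real (- (\<Sum>j. r j))" by simp
  have "\<bar>\<Sum>j. r j\<bar> \<le> (\<Sum>j. \<bar>r j\<bar>)" by (rule summable_rabs[OF sa])
  also have "\<dots> \<le> (\<Sum>j. 2 / (\<kappa> * \<omega> k) * (c j)\<^sup>2)" by (rule suminf_le[OF rb sa sM])
  also have "\<dots> = 2 / (\<kappa> * \<omega> k) * (\<Sum>j. (c j)\<^sup>2)" by (rule suminf_mult[OF c_l2])
  also have "\<dots> = 2 * (\<Sum>j. (c j)\<^sup>2) / (\<kappa> * \<omega> k)" by simp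
  finally show ?thesis using e by (intro exI[of _ "- (\<Sum>j. r j)"]) simp
qed

lemma lam_est:
  fixes \<omega> c :: "nat \<Rightarrow> real"
  assumes c_l2: "summable (\<lambda>j. (c j)\<^sup>2)" and om1: "\<forall>k. \<omega> k > 1" and sm: "strict_mono \<omega>"
   and kap: "0 < \<kappa>" "\<forall>j. \<omega> (j + 1) - \<omega> j \<ge> \<kappa>" and gp: "0 < \<gamma>"
   and Sl: "S_local c \<omega> \<gamma> lam k"
  shows "\<bar>Re (lam k)\<bar> \<ge> (c k)\<^sup>2 / (\<gamma> * (4 / \<gamma>\<^sup>2 + ((\<Sum>j. (c j)\<^sup>2) / 2 + 2 * (\<Sum>j. (c j)\<^sup>2) / \<kappa>)\<^sup>2))
     \<and> cmod (lam k - \<i> * of_real (\<omega> k)) \<le> \<gamma> * (\<Sum>j. (c j)\<^sup>2)"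
proof -
  define Cs where "Cs = (\<Sum>j. (c j)\<^sup>2)"
  define K1 where "K1 = Cs / 2 + 2 * Cs / \<kappa>"
  define K2 where "K2 = \<gamma> * (4 / \<gamma>\<^sup>2 + K1\<^sup>2)"
  define w where "w = \<omega> k"
  define a where "a = \<i> * of_real w"
  define ls where "ls = lamstar c \<omega> \<gamma> k"
  have w1: "w > 1" using om1 by (simp add: w_def)
  have ck: "(c k)\<^sup>2 \<le> Cs" unfolding Cs_def using sum_le_suminf[OF c_l2, of "{k}"] by simp
  have Cs0: "Cs \<ge> 0" using ck by (meson order_trans zero_le_power2)
  have "\<exists>R. R \<le> \<bar>Re ls\<bar> / 2 \<and> lam k \<in> ball ls R"
    using Sl unfolding S_local_def Let_def ls_def
    by (elim exE conjE) (rule exI, rule conjI, assumption+)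
  then obtain R where R: "R \<le> \<bar>Re ls\<bar> / 2" "lam k \<in> ball ls R" by blast
  obtain X where X: "(\<Sum>j. if j = k then 0 else fterm c \<omega> j (\<i> * of_real (\<omega> k))) = \<i> * of_real X"
      "\<bar>X\<bar> \<le> 2 * Cs / (\<kappa> * w)"
    using rsum[OF c_l2 om1 sm kap, of k] unfolding Cs_def w_def by blast
  define P where "P = 2 / (\<gamma> * w)"
  define Y where "Y = (c k)\<^sup>2 / (2 * w\<^sup>2) + X"
  define m where "m = (c k)\<^sup>2 / w"
  have P0: "P > 0" using gp w1 by (simp add: P_def)
  have m0: "m \<ge> 0" using w1 by (simp add: m_def)
  have Fd: "FSd c \<omega> \<gamma> k = of_real P + \<i> * of_real Y"
    using FSd_eq[OF c_l2 om1 sm kap gp, of k] X(1) unfolding P_def Y_def w_def by (simp add: algebra_simps)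
  have lsE: "ls = a - of_real m / (of_real P + \<i> * of_real Y)"
    unfolding ls_def lamstar_def FS_at Fd m_def a_def w_def by simp
  have Q0: "P\<^sup>2 + Y\<^sup>2 > 0" using P0 by (simp add: add_pos_nonneg)
  have ReLs: "\<bar>Re ls\<bar> = m * P / (P\<^sup>2 + Y\<^sup>2)"
    using m0 P0 Q0 by (simp add: lsE a_def Re_divide)
  have nF: "cmod (of_real P + \<i> * of_real Y) \<ge> P"
    using abs_Re_le_cmod[of "of_real P + \<i> * of_real Y"] P0 by simp
  have dls: "cmod (ls - a) \<le> \<gamma> * (c k)\<^sup>2 / 2"
  proof -
    have "cmod (ls - a) = m / cmod (of_real P + \<i> * of_real Y)" using m0 by (simp add: lsE norm_divide)
    also have "\<dots> \<le> m / P" using nF P0 m0 by (intro divide_left_mono) (auto intro!: mult_pos_pos)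
    also have "\<dots> = \<gamma> * (c k)\<^sup>2 / 2" using w1 gp by (simp add: m_def P_def field_simps)
    finally show ?thesis .
  qed
  have Yb: "\<bar>Y\<bar> \<le> K1 / w"
  proof -
    have "(c k)\<^sup>2 / (2 * w\<^sup>2) \<le> Cs / (2 * w)"
    proof -
      have "(c k)\<^sup>2 / (2 * w\<^sup>2) \<le> Cs / (2 * w\<^sup>2)" using ck w1 by (simp add: divide_right_mono)
      also have "\<dots> \<le> Cs / (2 * w)" using w1 Cs0 by (intro divide_left_mono) (auto simp: power2_eq_square)
      finally show ?thesis .
    qed
    moreover have "\<bar>(c k)\<^sup>2 / (2 * w\<^sup>2)\<bar> = (c k)\<^sup>2 / (2 * w\<^sup>2)" by simp
    moreover have "K1 / w = Cs / (2 * w) + 2 * Cs / (\<kappa> * w)" using w1 kap by (simp add: K1_def field_simps)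
    ultimately show ?thesis using X(2) unfolding Y_def by linarith
  qed
  have Qb: "P\<^sup>2 + Y\<^sup>2 \<le> (4 / \<gamma>\<^sup>2 + K1\<^sup>2) / w\<^sup>2"
  proof -
    have "Y\<^sup>2 \<le> (K1 / w)\<^sup>2" using Yb by (metis abs_ge_zero order_trans power2_abs power_mono)
    moreover have "P\<^sup>2 = 4 / \<gamma>\<^sup>2 / w\<^sup>2" by (simp add: P_def power_divide power_mult_distrib)
    ultimately show ?thesis by (simp add: power_divide add_divide_distrib)
  qed
  have ReLb: "\<bar>Re ls\<bar> \<ge> 2 * (c k)\<^sup>2 / K2"
  proof -
    have "m * P / ((4 / \<gamma>\<^sup>2 + K1\<^sup>2) / w\<^sup>2) \<le> m * P / (P\<^sup>2 + Y\<^sup>2)"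
    proof (rule divide_left_mono)
      show "0 < (4 / \<gamma>\<^sup>2 + K1\<^sup>2) / w\<^sup>2 * (P\<^sup>2 + Y\<^sup>2)"
        using Qb Q0 by (intro mult_pos_pos) linarith+
    qed (use Qb m0 P0 in auto)
    moreover have "m * P / ((4 / \<gamma>\<^sup>2 + K1\<^sup>2) / w\<^sup>2) = 2 * (c k)\<^sup>2 / K2"
    proof -
      define E where "E = 4 / \<gamma>\<^sup>2 + K1\<^sup>2"
      have E0: "E > 0" using gp by (simp add: E_def add_pos_nonneg)
      have K2E: "K2 = \<gamma> * E" by (simp add: K2_def E_def)
      have mP: "m * P = 2 * (c k)\<^sup>2 / (\<gamma> * w\<^sup>2)" by (simp add: m_def P_def power2_eq_square mult_ac)
      have w2: "w\<^sup>2 > 0" using w1 by simp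
      have "m * P / (E / w\<^sup>2) = 2 * (c k)\<^sup>2 / (\<gamma> * E)"
        unfolding mP using w2 E0 gp by (simp add: field_simps)
      then show ?thesis unfolding K2E E_def .
    qed
    ultimately show ?thesis using ReLs by simp
  qed
  have d1: "cmod (lam k - ls) < \<bar>Re ls\<bar> / 2" using R by (simp add: dist_norm norm_minus_commute)
  have "\<bar>Re ls\<bar> \<le> \<bar>Re (lam k)\<bar> + cmod (lam k - ls)"
    using abs_Re_le_cmod[of "lam k - ls"] by simp
  then have A1: "\<bar>Re (lam k)\<bar> \<ge> (c k)\<^sup>2 / K2" using d1 ReLb by (simp add: field_simps)
  have "\<bar>Re ls\<bar> \<le> cmod (ls - a)" using abs_Re_le_cmod[of "ls - a"] by (simp add: a_def)
  then have "cmod (lam k - a) \<le> \<gamma> * (c k)\<^sup>2"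
    using d1 dls norm_triangle_ineq[of "lam k - ls" "ls - a"] by simp
  also have "\<dots> \<le> \<gamma> * Cs" using ck gp by simp
  finally show ?thesis using A1 unfolding K2_def K1_def Cs_def a_def w_def by simp
qed

lemma diag_bound:
  fixes q d :: "nat \<Rightarrow> complex"
  assumes q: "l2 q" and d: "\<forall>n. cmod (d n) \<ge> e" and e: "e > 0"
  shows "l2 (\<lambda>n. q n / d n) \<and> (\<Sum>n. (cmod (q n / d n))\<^sup>2) \<le> (1/e)\<^sup>2 * (\<Sum>n. (cmod (q n))\<^sup>2)"
proof -
  have sq: "summable (\<lambda>n. (cmod (q n))\<^sup>2)" using q by (simp add: l2_def)
  have b: "(cmod (q n / d n))\<^sup>2 \<le> (1/e)\<^sup>2 * (cmod (q n))\<^sup>2" for n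
  proof -
    have dn: "cmod (d n) > 0" using d e by (meson less_le_trans)
    have "cmod (q n / d n) = cmod (q n) / cmod (d n)" by (simp add: norm_divide)
    also have "\<dots> \<le> cmod (q n) / e" using d e dn by (intro divide_left_mono) (auto intro!: mult_pos_pos)
    finally have "cmod (q n / d n) \<le> (1/e) * cmod (q n)" by simp
    then have h: "(cmod (q n / d n))\<^sup>2 \<le> ((1/e) * cmod (q n))\<^sup>2" by (intro power_mono) auto
    then show ?thesis unfolding power_mult_distrib .
  qed
  have sM: "summable (\<lambda>n. (1/e)\<^sup>2 * (cmod (q n))\<^sup>2)" by (intro summable_mult sq)
  have s1: "summable (\<lambda>n. (cmod (q n / d n))\<^sup>2)"
    by (rule summable_comparison_test'[OF sM, of 0]) (use b in auto)
  have "(\<Sum>n. (cmod (q n / d n))\<^sup>2) \<le> (\<Sum>n. (1/e)\<^sup>2 * (cmod (q n))\<^sup>2)" by (rule suminf_le[OF b s1 sM])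
  also have "\<dots> = (1/e)\<^sup>2 * (\<Sum>n. (cmod (q n))\<^sup>2)" by (rule suminf_mult[OF sq])
  finally show ?thesis using s1 by (simp add: l2_def)
qed

theorem lemma4p1:
  fixes \<omega> c :: "nat \<Rightarrow> real" and \<gamma> \<kappa> \<alpha> \<beta> :: real and k0 :: nat
    and lam :: "nat \<Rightarrow> complex"
  assumes om_pos: "0 < \<omega> 0"
    and om_mono: "strict_mono \<omega>"
    and c_l2: "summable (\<lambda>j. (c j)\<^sup>2)"
    and c_nz: "\<forall>j. c j \<noteq> 0"
    and gamma_pos: "0 < \<gamma>"
    and S_om_gt1: "\<forall>k. \<omega> k > 1"
    and S_gaps: "\<forall>k\<ge>1. \<omega> (k + 1) - \<omega> k > \<omega> k - \<omega> (k - 1)"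
    and S_eig: "{\<mu>. eigenvalue_A c \<omega> \<gamma> \<mu>} = range lam \<union> range (\<lambda>n. cnj (lam n))"
    and S_inj: "inj lam"
    and S_distinct: "\<forall>n m. lam n \<noteq> cnj (lam m)"
    and S_zero: "\<forall>n. fS c \<omega> \<gamma> (lam n) = 0 \<and> fS c \<omega> \<gamma> (cnj (lam n)) = 0"
    and S_simple: "\<forall>n. deriv (fS c \<omega> \<gamma>) (lam n) \<noteq> 0 \<and> deriv (fS c \<omega> \<gamma>) (cnj (lam n)) \<noteq> 0"
    and S_not_imag: "\<forall>n. Re (lam n) \<noteq> 0"
    and S_local: "\<forall>k. S_local c \<omega> \<gamma> lam k"
    and A2: "0 < \<kappa>" "\<forall>j. \<omega> (j + 1) - \<omega> j \<ge> \<kappa>"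
    and A3: "0 < \<alpha>" "0 < \<beta>" "\<forall>k\<ge>k0. \<bar>c k\<bar> * \<omega> k powr (\<alpha> / 2) \<ge> \<beta>"
  shows "\<exists>C S0. \<forall>s::real. \<bar>s\<bar> \<ge> S0 \<longrightarrow>
           (\<forall>q p. l2 q \<and> l2 p \<longrightarrow>
              l2 (fst (resolvG lam (\<i> * of_real s) q p)) \<and>
              l2 (snd (resolvG lam (\<i> * of_real s) q p)) \<and>
              normH (fst (resolvG lam (\<i> * of_real s) q p)) (snd (resolvG lam (\<i> * of_real s) q p))
                \<le> C * \<bar>s\<bar> powr \<alpha> * normH q p)"
proof -
  define Cs where "Cs = (\<Sum>j. (c j)\<^sup>2)"
  define K1 where "K1 = Cs / 2 + 2 * Cs / \<kappa>"
  define Kd where "Kd = \<gamma> * (4 / \<gamma>\<^sup>2 + K1\<^sup>2)"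
  define D where "D = \<gamma> * Cs"
  have est: "\<bar>Re (lam n)\<bar> \<ge> (c n)\<^sup>2 / Kd \<and> cmod (lam n - \<i> * of_real (\<omega> n)) \<le> D" for n
    using lam_est[OF c_l2 S_om_gt1 om_mono A2 gamma_pos S_local[rule_format, of n]]
    unfolding Kd_def K1_def Cs_def D_def by simp
  have Kd0: "Kd > 0"
  proof -
    have "4 / \<gamma>\<^sup>2 + K1\<^sup>2 > 0" using gamma_pos by (simp add: add_pos_nonneg)
    then show ?thesis using gamma_pos by (simp add: Kd_def)
  qed
  have D0: "D \<ge> 0"
  proof -
    have "0 \<le> cmod (lam 0 - \<i> * of_real (\<omega> 0))" by simp
    then show ?thesis using est[of 0] by linarith
  qed
  define B where "B = insert (\<beta>\<^sup>2) ((\<lambda>n. (c n)\<^sup>2 * \<omega> n powr \<alpha>) ` {..<k0})"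
  define \<beta>0 where "\<beta>0 = Min B"
  have Bfin: "finite B" by (simp add: B_def)
  have B0: "\<forall>x\<in>B. x > 0"
  proof
    fix x assume "x \<in> B"
    then consider "x = \<beta>\<^sup>2" | n where "x = (c n)\<^sup>2 * \<omega> n powr \<alpha>" unfolding B_def by blast
    then show "x > 0"
    proof cases
      case 1 then show ?thesis using A3 by simp
    next
      case (2 n)
      have "\<omega> n > 0" using S_om_gt1 by (meson less_trans zero_less_one)
      then show ?thesis using 2 c_nz by simp
    qed
  qed
  have b00: "\<beta>0 > 0" unfolding \<beta>0_def using Bfin B0 by (simp add: B_def)
  have cb: "(c n)\<^sup>2 * \<omega> n powr \<alpha> \<ge> \<beta>0" for n
  proof (cases "n < k0")
    case True
    then have "(c n)\<^sup>2 * \<omega> n powr \<alpha> \<in> B" by (simp add: B_def)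
    then show ?thesis unfolding \<beta>0_def using Bfin by simp
  next
    case False
    have wn: "\<omega> n > 0" using S_om_gt1 by (meson less_trans zero_less_one)
    have "\<beta> \<le> \<bar>c n\<bar> * \<omega> n powr (\<alpha> / 2)" using A3(3) False by simp
    then have "\<beta>\<^sup>2 \<le> (\<bar>c n\<bar> * \<omega> n powr (\<alpha> / 2))\<^sup>2" using A3(2) by (intro power_mono) auto
    also have "\<dots> = (c n)\<^sup>2 * (\<omega> n powr (\<alpha> / 2) * \<omega> n powr (\<alpha> / 2))"
      by (simp add: power_mult_distrib power2_eq_square)
    also have "\<omega> n powr (\<alpha> / 2) * \<omega> n powr (\<alpha> / 2) = \<omega> n powr \<alpha>"
      by (simp add: powr_add[symmetric])
    finally have "\<beta>\<^sup>2 \<le> (c n)\<^sup>2 * \<omega> n powr \<alpha>" .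
    moreover have "\<beta>0 \<le> \<beta>\<^sup>2" unfolding \<beta>0_def using Bfin by (simp add: B_def)
    ultimately show ?thesis by linarith
  qed
  define m where "m = min 1 (\<beta>0 / (Kd * (2 + D) powr \<alpha>))"
  have m0: "m > 0" using b00 Kd0 D0 by (simp add: m_def)
  have m1: "m \<le> 1" by (simp add: m_def)
  have low: "cmod (\<mu> - \<i> * of_real s) \<ge> m / \<bar>s\<bar> powr \<alpha>"
    if s1: "\<bar>s\<bar> \<ge> 1" and mu: "\<mu> = lam n \<or> \<mu> = cnj (lam n)" for s \<mu> n
  proof -
    have sp: "\<bar>s\<bar> powr \<alpha> \<ge> 1" using s1 A3(1) by (simp add: ge_one_powr_ge_zero)
    have wn: "\<omega> n > 1" using S_om_gt1 by simp
    have ReM: "\<bar>Re \<mu>\<bar> = \<bar>Re (lam n)\<bar>" and ImM: "\<bar>Im \<mu>\<bar> = \<bar>Im (lam n)\<bar>" using mu by auto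
    have c1: "cmod (\<mu> - \<i> * of_real s) \<ge> \<bar>Re \<mu>\<bar>" using abs_Re_le_cmod[of "\<mu> - \<i> * of_real s"] by simp
    have c2: "cmod (\<mu> - \<i> * of_real s) \<ge> \<bar>Im \<mu> - s\<bar>" using abs_Im_le_cmod[of "\<mu> - \<i> * of_real s"] by simp
    have imb: "\<bar>Im (lam n) - \<omega> n\<bar> \<le> D"
      using est[of n] abs_Im_le_cmod[of "lam n - \<i> * of_real (\<omega> n)"] by simp
    show ?thesis
    proof (cases "\<omega> n \<ge> 1 + D + \<bar>s\<bar>")
      case True
      have "\<bar>Im \<mu> - s\<bar> \<ge> 1" using True imb ImM by linarith
      moreover have "m / \<bar>s\<bar> powr \<alpha> \<le> 1" using m1 m0 sp by (simp add: divide_le_eq)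
      ultimately show ?thesis using c2 by linarith
    next
      case False
      have "D * 1 \<le> D * \<bar>s\<bar>" by (rule mult_left_mono[OF s1 D0])
      then have wl: "\<omega> n \<le> (2 + D) * \<bar>s\<bar>" using False s1 by (simp add: algebra_simps)
      have "\<omega> n powr \<alpha> \<le> ((2 + D) * \<bar>s\<bar>) powr \<alpha>" using wl wn A3(1) by (intro powr_mono2) auto
      also have "\<dots> = (2 + D) powr \<alpha> * \<bar>s\<bar> powr \<alpha>" using D0 by (simp add: powr_mult)
      finally have wp: "\<omega> n powr \<alpha> \<le> (2 + D) powr \<alpha> * \<bar>s\<bar> powr \<alpha>" .
      have wp0: "\<omega> n powr \<alpha> > 0" using wn by simp
      have "(c n)\<^sup>2 \<ge> \<beta>0 / \<omega> n powr \<alpha>" using cb[of n] wp0 by (simp add: divide_le_eq)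
      moreover have "\<beta>0 / \<omega> n powr \<alpha> \<ge> \<beta>0 / ((2 + D) powr \<alpha> * \<bar>s\<bar> powr \<alpha>)"
      proof (rule divide_left_mono)
        have "(2 + D) powr \<alpha> > 0" using D0 by simp
        then show "0 < (2 + D) powr \<alpha> * \<bar>s\<bar> powr \<alpha> * \<omega> n powr \<alpha>" using sp wp0 by (intro mult_pos_pos) auto
      qed (use wp b00 in auto)
      ultimately have "(c n)\<^sup>2 / Kd \<ge> \<beta>0 / ((2 + D) powr \<alpha> * \<bar>s\<bar> powr \<alpha>) / Kd"
        using Kd0 by (intro divide_right_mono) auto
      moreover have "\<beta>0 / ((2 + D) powr \<alpha> * \<bar>s\<bar> powr \<alpha>) / Kd = (\<beta>0 / (Kd * (2 + D) powr \<alpha>)) / \<bar>s\<bar> powr \<alpha>"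
        by (simp add: field_simps)
      moreover have "m / \<bar>s\<bar> powr \<alpha> \<le> (\<beta>0 / (Kd * (2 + D) powr \<alpha>)) / \<bar>s\<bar> powr \<alpha>"
        using sp by (intro divide_right_mono) (auto simp: m_def)
      ultimately show ?thesis using est[of n] ReM c1 by linarith
    qed
  qed
  show ?thesis
  proof (rule exI[of _ "1/m"], rule exI[of _ 1], intro allI impI)
    fix s :: real and q p assume s1: "\<bar>s\<bar> \<ge> 1" and qp: "l2 q \<and> l2 p"
    define e where "e = m / \<bar>s\<bar> powr \<alpha>"
    have sp: "\<bar>s\<bar> powr \<alpha> > 0" using s1 by simp
    have e0: "e > 0" using m0 sp by (simp add: e_def)
    have ie: "1 / e = 1 / m * \<bar>s\<bar> powr \<alpha>" by (simp add: e_def)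
    have d1: "\<forall>n. cmod (cnj (lam n) - \<i> * of_real s) \<ge> e" unfolding e_def using low[OF s1] by blast
    have d2: "\<forall>n. cmod (lam n - \<i> * of_real s) \<ge> e" unfolding e_def using low[OF s1] by blast
    have fs: "fst (resolvG lam (\<i> * of_real s) q p) = (\<lambda>n. q n / (cnj (lam n) - \<i> * of_real s))"
      and sn: "snd (resolvG lam (\<i> * of_real s) q p) = (\<lambda>n. p n / (lam n - \<i> * of_real s))"
      by (simp_all add: resolvG_def)
    note Q = diag_bound[OF conjunct1[OF qp] d1 e0]
    note P = diag_bound[OF conjunct2[OF qp] d2 e0]
    have L1: "l2 (fst (resolvG lam (\<i> * of_real s) q p))" using Q fs by simp
    have L2: "l2 (snd (resolvG lam (\<i> * of_real s) q p))" using P sn by simp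
    have "normH (fst (resolvG lam (\<i> * of_real s) q p)) (snd (resolvG lam (\<i> * of_real s) q p))
        \<le> sqrt ((1/e)\<^sup>2 * ((\<Sum>n. (cmod (q n))\<^sup>2) + (\<Sum>n. (cmod (p n))\<^sup>2)))"
      unfolding fs sn normH_def using Q P by (intro real_sqrt_le_mono) (simp add: algebra_simps)
    also have "\<dots> = (1/e) * normH q p" using e0 by (simp add: real_sqrt_mult normH_def)
    finally have "normH (fst (resolvG lam (\<i> * of_real s) q p)) (snd (resolvG lam (\<i> * of_real s) q p))
        \<le> 1 / m * \<bar>s\<bar> powr \<alpha> * normH q p" by (simp only: ie)
    then show "l2 (fst (resolvG lam (\<i> * of_real s) q p)) \<and>
              l2 (snd (resolvG lam (\<i> * of_real s) q p)) \<and>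
              normH (fst (resolvG lam (\<i> * of_real s) q p)) (snd (resolvG lam (\<i> * of_real s) q p))
                \<le> 1 / m * \<bar>s\<bar> powr \<alpha> * normH q p" using L1 L2 by blast
  qed
qed

end
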